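(* Let $(G,c)$ be a $k$-terminal network whose minimum $S$-separating cuts are unique for all $S\subset Q$, $S\neq\emptyset,Q$, so that $\Delta_{G,c}>0$. Let $A_G=A_{G,c}\in\{0,1\}^{m\times E(G)}$ be its cutset-edge incidence matrix, let $r=\mathrm{rank}(A_G)\ge1$, and fix any matrix $A\in\{0,1\}^{m\times(r-1)}$ with column span $W_A\subseteq\mathbb{R}^m$. Let $w\in\mathbb{R}^{E(G)}$ be random with independent coordinates $w(e)$, each uniformly distributed on $[0,\frac{1}{\Delta_{G,c}|E(G)|}]$, and let $\vec c\in\mathbb{R}^{E(G)}$ be the vector of costs $c$. Then $$\Pr_w\big[A_G(\vec c+\vec w)\in W_A\big]=0.$$
   Context: For $S\subset Q$, $\bar S=Q\setminus S$; a cut $(W,V(G)\setminus W)$ is $S$-separating if $W\cap Q\in\{S,\bar S\}$; its cost is the total cost of its cutset (edges with exactly one endpoint in $W$). $\Delta_{G,c}(S)\ge0$ is the difference between the two smallest costs among all $S$-separating cuts, and $\Delta_{G,c}=\min_S\Delta_{G,c}(S)$. Cutset-edge incidence matrix: fix an enumeration $S_1,\dots,S_m$, $m=2^{k-1}-1$, of representatives of the distinct nontrivial bipartitions $Q=S_i\cup\bar S_i$, and for each $i$ a minimum-cost $S_i$-separating cut; $(A_{G,c})_{i,e}=1$ iff $e$ lies in that cut's cutset, else $0$. *)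

theory Defs
  imports "HOL-Probability.Probability" "Jordan_Normal_Form.DL_Rank"
begin

definition k_terminal_network ::
  "'v set \<Rightarrow> 'v set set \<Rightarrow> 'v set \<Rightarrow> nat \<Rightarrow> ('v set \<Rightarrow> real) \<Rightarrow> bool" where
  "k_terminal_network V E Q k c \<longleftrightarrow>
     finite V \<and> (\<forall>e\<in>E. e \<subseteq> V \<and> card e = 2) \<and> Q \<subseteq> V \<and> card Q = k \<and>
     (\<forall>e\<in>E. c e > 0)"

definition cutset :: "'v set set \<Rightarrow> 'v set \<Rightarrow> 'v set set" where
  "cutset E W = {e \<in> E. card (e \<inter> W) = 1}"

definition cut_cost :: "'v set set \<Rightarrow> ('v set \<Rightarrow> real) \<Rightarrow> 'v set \<Rightarrow> real" where
  "cut_cost E c W = (\<Sum>e\<in>cutset E W. c e)"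

definition nontrivial_terminal_set :: "'v set \<Rightarrow> 'v set \<Rightarrow> bool" where
  "nontrivial_terminal_set Q S \<longleftrightarrow> S \<subseteq> Q \<and> S \<noteq> {} \<and> S \<noteq> Q"

definition separating :: "'v set \<Rightarrow> 'v set \<Rightarrow> 'v set \<Rightarrow> 'v set \<Rightarrow> bool" where
  "separating V Q S W \<longleftrightarrow> W \<subseteq> V \<and> (W \<inter> Q = S \<or> W \<inter> Q = Q - S)"

definition min_separating ::
  "'v set \<Rightarrow> 'v set set \<Rightarrow> 'v set \<Rightarrow> ('v set \<Rightarrow> real) \<Rightarrow> 'v set \<Rightarrow> 'v set \<Rightarrow> bool" where
  "min_separating V E Q c S W \<longleftrightarrow> separating V Q S W \<and>
     (\<forall>W'. separating V Q S W' \<longrightarrow> cut_cost E c W \<le> cut_cost E c W')"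

text \<open>Uniqueness of the minimum S-separating cut; the cuts (W, V-W) and (V-W, W) are the same cut.\<close>
definition unique_min_cut ::
  "'v set \<Rightarrow> 'v set set \<Rightarrow> 'v set \<Rightarrow> ('v set \<Rightarrow> real) \<Rightarrow> 'v set \<Rightarrow> bool" where
  "unique_min_cut V E Q c S \<longleftrightarrow>
     (\<exists>W. min_separating V E Q c S W \<and>
        (\<forall>W'. min_separating V E Q c S W' \<longrightarrow> W' = W \<or> W' = V - W))"

definition Delta_S ::
  "'v set \<Rightarrow> 'v set set \<Rightarrow> 'v set \<Rightarrow> ('v set \<Rightarrow> real) \<Rightarrow> 'v set \<Rightarrow> real" where
  "Delta_S V E Q c S = Min {cut_cost E c W2 - cut_cost E c W1 | W1 W2.
      min_separating V E Q c S W1 \<and> separating V Q S W2 \<and> W2 \<noteq> W1 \<and> W2 \<noteq> V - W1}"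

definition Delta :: "'v set \<Rightarrow> 'v set set \<Rightarrow> 'v set \<Rightarrow> ('v set \<Rightarrow> real) \<Rightarrow> real" where
  "Delta V E Q c = Min {Delta_S V E Q c S | S. nontrivial_terminal_set Q S}"

text \<open>Cutset-edge incidence matrix: rows indexed by i < m (bipartition S i, chosen minimum
  cut W i), columns by the edges in the enumeration es of E.\<close>
definition cutset_matrix :: "'v set set \<Rightarrow> nat \<Rightarrow> (nat \<Rightarrow> 'v set) \<Rightarrow> 'v set list \<Rightarrow> real mat" where
  "cutset_matrix E m Wf es =
     Matrix.mat m (length es) (\<lambda>(i, j). if es ! j \<in> cutset E (Wf i) then 1 else 0)"

end

theory Submission
  imports Defs "Jordan_Normal_Form.Gram_Schmidt"
begin


context cof_vec_space begin

lemma gs_exists: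
  assumes "set ws \<subseteq> carrier_vec n"
  shows "\<exists>qs. set qs \<subseteq> carrier_vec n \<and> corthogonal qs \<and> span (set qs) = span (set ws)"
  using assms
proof (induct ws)
  case Nil
  then show ?case by (intro exI[of _ "[]"]) (auto simp: corthogonal_def)
next
  case (Cons w ws)
  then obtain qs where qs: "set qs \<subseteq> carrier_vec n" "corthogonal qs" "span (set qs) = span (set ws)"
    and w: "w \<in> carrier_vec n" and ws: "set ws \<subseteq> carrier_vec n" by auto
  have dist: "distinct qs" using corthogonal_distinct qs by auto
  have spw: "span (set qs \<union> {w}) = span (set ws \<union> {w})"
    by (rule span_Un) (use qs w ws in auto)
  show ?case
  proof (cases "w \<in> span (set qs)")
    case True
    have "span (set qs) = span (set qs \<union> {w})" using already_in_span[OF qs(1) True] .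
    then show ?thesis using qs spw by (intro exI[of _ qs]) auto
  next
    case False
    have "span (set ((adjuster n w qs + w) # qs)) = span (set (w # qs))"
      by (rule gram_schmidt_sub_span[OF w qs(1) dist])
    also have "set (w # qs) = set qs \<union> {w}" by auto
    also have "span \<dots> = span (set (w # ws))" using spw by (simp add: Un_commute)
    finally show ?thesis using adjust_orthogonal[OF qs(1,2) w False] qs(1) w dist
      by (intro exI[of _ "(adjuster n w qs + w) # qs"]) auto
  qed
qed

lemma rank_le_of_cols_in_span:
  assumes A: "A \<in> carrier_mat n nc" and B: "B \<in> carrier_mat n nc'"
    and sub: "set (cols B) \<subseteq> span (set (cols A))"
  shows "rank B \<le> rank A"
proof -
  define W1 where "W1 = span (set (cols A))"
  have cA: "set (cols A) \<subseteq> carrier_vec n" using A cols_dim by blast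
  have cB: "set (cols B) \<subseteq> carrier_vec n" using B cols_dim by blast
  have sW1: "subspace class_ring W1 V" unfolding W1_def using span_is_subspace cA by auto
  have "span (set (cols B)) \<subseteq> W1"
    using sub unfolding W1_def by (simp add: cA span_is_submodule span_is_subset)
  have sB: "subspace class_ring (span (set (cols B))) V" using span_is_subspace cB by auto
  have subspace: "subspace class_ring (span (set (cols B))) (vs W1)"
    using nested_subspaces[OF sW1 sB \<open>span (set (cols B)) \<subseteq> W1\<close>] .
  have fin_dim: "vectorspace.fin_dim class_ring (vs W1)" unfolding W1_def using fin_dim_span_cols A by auto
  have "vectorspace.fin_dim class_ring (span_vs (set (cols B)))" using fin_dim_span_cols B by blast
  then have "rank B \<le> vectorspace.dim class_ring (vs W1)" unfolding rank_def
    using vectorspace.subspace_dim[OF subspace_is_vs[OF sW1] subspace fin_dim] by auto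
  then show ?thesis unfolding rank_def W1_def .
qed

end

lemma conj_real_vec[simp]: "conjugate (v::real vec) = v"
  by (auto simp: conjugate_vec_def)

locale rvs = cof_vec_space n "TYPE(real)" for n
begin

lemma orth_span:
  fixes qs :: "real vec list" and y x :: "real vec"
  assumes qs: "set qs \<subseteq> carrier_vec n" and y: "y \<in> carrier_vec n"
    and o: "\<forall>q\<in>set qs. scalar_prod y q = 0" and x: "x \<in> span (set qs)"
  shows "scalar_prod y x = 0"
proof -
  have "y \<in> orthogonal_complement (set qs)" using y o unfolding orthogonal_complement_def by auto
  then have "y \<in> orthogonal_complement (span (set qs))" using in_orthogonal_complement_span[OF qs] by simp
  then show ?thesis using x unfolding orthogonal_complement_def by auto
qed

lemma adj_orth:
  fixes qs :: "real vec list" and v :: "real vec"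
  assumes qs: "set qs \<subseteq> carrier_vec n" and orth: "corthogonal qs" and v: "v \<in> carrier_vec n"
  shows "\<forall>q\<in>set qs. scalar_prod (adjuster n v qs + v) q = 0"
proof
  fix q assume "q \<in> set qs"
  then obtain i where i: "i < length qs" "q = qs ! i" by (metis in_set_conv_nth)
  show "scalar_prod (adjuster n v qs + v) q = 0" using adjust_zero[OF qs orth v i(1)] i by simp
qed

lemma proj_zero_iff:
  fixes qs :: "real vec list" and v :: "real vec"
  assumes qs: "set qs \<subseteq> carrier_vec n" and orth: "corthogonal qs" and v: "v \<in> carrier_vec n"
  shows "v \<in> span (set qs) \<longleftrightarrow> adjuster n v qs + v = 0\<^sub>v n"
proof -
  have dist: "distinct qs" using corthogonal_distinct orth by auto
  let ?z = "adjuster n v qs + v"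
  have z: "?z \<in> carrier_vec n" using adjuster_carrier[OF v qs dist] v by auto
  show ?thesis
  proof
    assume "v \<in> span (set qs)"
    then have zs: "?z \<in> span (set qs)" using adjust_preserves_span[OF v qs dist] by auto
    have "scalar_prod ?z ?z = 0" using orth_span[OF qs z adj_orth[OF qs orth v] zs] .
    then have "?z \<bullet>c ?z = 0" by simp
    then show "?z = 0\<^sub>v n" using conjugate_square_eq_0_vec[OF z] by simp
  next
    assume "?z = 0\<^sub>v n"
    moreover have "0\<^sub>v n \<in> span (set qs)" using vectorspace.span_zero[OF vec_vs, of n "set qs"] by simp
    ultimately show "v \<in> span (set qs)" using adjust_preserves_span[OF v qs dist] by auto
  qed
qed


lemma key_vector:
  fixes MG A :: "real mat"
  assumes MG: "MG \<in> carrier_mat n N" and A: "A \<in> carrier_mat n p" and rk: "rank A < rank MG"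
  shows "\<exists>qs u j0. set qs \<subseteq> carrier_vec n \<and> corthogonal qs \<and> span (set qs) = span (set (cols A))
     \<and> j0 < N \<and> u j0 \<noteq> (0::real)
     \<and> (\<forall>v \<in> carrier_vec N. MG *\<^sub>v v \<in> span (set qs) \<longrightarrow> (\<Sum>j\<in>{0..<N}. u j * v $ j) = 0)"
proof -
  have cA: "set (cols A) \<subseteq> carrier_vec n" using A cols_dim by blast
  obtain qs where qs: "set qs \<subseteq> carrier_vec n" "corthogonal qs" "span (set qs) = span (set (cols A))"
    using gs_exists[OF cA] by blast
  have dist: "distinct qs" using corthogonal_distinct qs by auto
  obtain j0 where j0: "j0 < N" "col MG j0 \<notin> span (set qs)"
  proof (rule ccontr)
    assume "\<not> thesis"
    then have "\<forall>j<N. col MG j \<in> span (set qs)" using that by blast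
    then have "set (cols MG) \<subseteq> span (set (cols A))" using MG qs(3)
      by (auto simp: in_set_conv_nth)
    then have "rank MG \<le> rank A" using rank_le_of_cols_in_span[OF A MG] by auto
    then show False using rk by simp
  qed
  have cj: "col MG j0 \<in> carrier_vec n" using MG j0 by auto
  define y where "y = adjuster n (col MG j0) qs + col MG j0"
  have ac: "adjuster n (col MG j0) qs \<in> carrier_vec n" using adjuster_carrier[OF cj qs(1) dist] .
  have y: "y \<in> carrier_vec n" unfolding y_def using ac cj by auto
  have yo: "\<forall>q\<in>set qs. scalar_prod y q = 0" unfolding y_def using adj_orth[OF qs(1,2) cj] .
  have y0: "y \<noteq> 0\<^sub>v n" unfolding y_def using adjust_nonzero[OF qs(1) dist cj j0(2)] .
  define u where "u j = scalar_prod y (col MG j)" for j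
  have "scalar_prod y y = scalar_prod y (adjuster n (col MG j0) qs) + scalar_prod y (col MG j0)"
  proof -
    have "scalar_prod y y = scalar_prod y (adjuster n (col MG j0) qs + col MG j0)" by (simp add: y_def)
    then show ?thesis using scalar_prod_add_distrib[OF y ac cj] by simp
  qed
  also have "scalar_prod y (adjuster n (col MG j0) qs) = 0"
    using orth_span[OF qs(1) y yo adjuster_in_span[OF cj qs(1) dist]] .
  finally have "u j0 = scalar_prod y y" unfolding u_def by simp
  moreover have "scalar_prod y y \<noteq> 0" using conjugate_square_eq_0_vec[OF y] y0 by simp
  ultimately have u0: "u j0 \<noteq> 0" by simp
  have main: "(\<Sum>j\<in>{0..<N}. u j * v $ j) = 0" if v: "v \<in> carrier_vec N" and sp: "MG *\<^sub>v v \<in> span (set qs)" for v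
  proof -
    have "(\<Sum>j\<in>{0..<N}. u j * v $ j) = scalar_prod (vec N (\<lambda>j. scalar_prod y (col MG j))) v"
      unfolding scalar_prod_def u_def using v by auto
    also have "\<dots> = scalar_prod y (vec n (\<lambda>i. scalar_prod (row MG i) v))"
      by (rule assoc_scalar_prod[OF y MG v])
    also have "vec n (\<lambda>i. scalar_prod (row MG i) v) = MG *\<^sub>v v" using MG by (auto simp: mult_mat_vec_def)
    also have "scalar_prod y (MG *\<^sub>v v) = 0" using orth_span[OF qs(1) y yo sp] .
    finally show ?thesis .
  qed
  show ?thesis using qs j0(1) u0 main by blast
qed

end



lemma finite_measure_unif: "finite_measure (uniform_measure lborel {0..(a::real)})"
proof (rule finite_measureI)
  have "emeasure (uniform_measure lborel {0..a}) (space (uniform_measure lborel {0..a}))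
      = emeasure lborel {0..a} / emeasure lborel {0..a}"
    by (simp add: emeasure_uniform_measure)
  also have "\<dots> \<noteq> \<infinity>"
  proof (cases "a \<le> 0")
    case True
    have "emeasure lborel {0..a} = ennreal (if 0 \<le> a then a - 0 else 0)" by (rule emeasure_lborel_Icc_eq)
    then have "emeasure lborel {0..a} = 0" using True by auto
    then show ?thesis by simp
  next
    case False
    then have "emeasure lborel {0..a} = ennreal a" by simp
    then show ?thesis using False by (simp add: divide_ennreal)
  qed
  finally show "emeasure (uniform_measure lborel {0..a}) (space (uniform_measure lborel {0..a})) \<noteq> \<infinity>" .
qed

lemma null_hyperplane:
  fixes E :: "'e set" and es :: "'e list" and u :: "nat \<Rightarrow> real" and c :: "'e \<Rightarrow> real" and a :: real
  assumes es: "distinct es" "set es = E" and j0: "j0 < length es" and u0: "u j0 \<noteq> 0"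
  shows "{w \<in> space (PiM E (\<lambda>_. uniform_measure lborel {0..a})).
           (\<Sum>j\<in>{0..<length es}. u j * (c (es ! j) + w (es ! j))) = 0}
         \<in> null_sets (PiM E (\<lambda>_. uniform_measure lborel {0..a}))"
    (is "?N \<in> null_sets ?P")
proof -
  define \<mu> where "\<mu> = uniform_measure lborel {0..a}"
  interpret fm: finite_measure \<mu> unfolding \<mu>_def by (rule finite_measure_unif)
  interpret ps: product_sigma_finite "\<lambda>_. \<mu>"
    unfolding product_sigma_finite_def using fm.sigma_finite_measure_axioms by simp
  have finE: "finite E" using es by auto
  have esE: "\<And>j. j < length es \<Longrightarrow> es ! j \<in> E" using es by auto
  have meas_comp [measurable]: "(\<lambda>w. w (es ! j)) \<in> borel_measurable (PiM E (\<lambda>_. \<mu>))" if "j < length es" for j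
  proof -
    have "(\<lambda>w. w (es ! j)) \<in> measurable (PiM E (\<lambda>_. \<mu>)) \<mu>"
      by (rule measurable_component_singleton) (use esE that in auto)
    moreover have "measurable (PiM E (\<lambda>_. \<mu>)) \<mu> = measurable (PiM E (\<lambda>_. \<mu>)) borel"
      by (rule measurable_cong_sets) (simp_all add: \<mu>_def)
    ultimately show ?thesis by simp
  qed
  have Nsets: "?N \<in> sets ?P" unfolding \<mu>_def[symmetric] by measurable
  define e0 where "e0 = es ! j0"
  define I where "I = E - {e0}"
  have E_eq: "E = insert e0 I" "e0 \<notin> I" "finite I" using esE[OF j0] finE unfolding I_def e0_def by auto
  define R where "R x = (\<Sum>j\<in>{0..<length es} - {j0}. u j * (c (es ! j) + x (es ! j)))" for x :: "'e \<Rightarrow> real"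
  define y0 where "y0 x = - R x / u j0 - c e0" for x
  have ptw: "indicator ?N (x(e0 := y)) \<le> (indicator {y0 x} y :: ennreal)" for x y
  proof (cases "x(e0 := y) \<in> ?N")
    case True
    then have "(\<Sum>j\<in>{0..<length es}. u j * (c (es ! j) + (x(e0 := y)) (es ! j))) = 0" by simp
    moreover have "(\<Sum>j\<in>{0..<length es}. u j * (c (es ! j) + (x(e0 := y)) (es ! j)))
        = u j0 * (c e0 + y) + (\<Sum>j\<in>{0..<length es} - {j0}. u j * (c (es ! j) + (x(e0 := y)) (es ! j)))"
      by (subst sum.remove[of _ j0]) (use j0 in \<open>auto simp: e0_def\<close>)
    moreover have "(\<Sum>j\<in>{0..<length es} - {j0}. u j * (c (es ! j) + (x(e0 := y)) (es ! j))) = R x"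
      unfolding R_def
    proof (rule sum.cong)
      fix j assume "j \<in> {0..<length es} - {j0}"
      then have "es ! j \<noteq> e0" unfolding e0_def using es(1) j0 by (auto simp: nth_eq_iff_index_eq)
      then show "u j * (c (es ! j) + (x(e0 := y)) (es ! j)) = u j * (c (es ! j) + x (es ! j))" by simp
    qed simp
    ultimately have "u j0 * (c e0 + y) + R x = 0" by simp
    then have "y = y0 x" unfolding y0_def using u0 by (simp add: field_simps)
    then show ?thesis by (simp add: indicator_def)
  qed simp
  have inner: "(\<integral>\<^sup>+ y. indicator ?N (x(e0 := y)) \<partial>\<mu>) = 0" for x
  proof -
    have "(\<integral>\<^sup>+ y. indicator ?N (x(e0 := y)) \<partial>\<mu>) \<le> (\<integral>\<^sup>+ y. indicator {y0 x} y \<partial>\<mu>)"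
      by (rule nn_integral_mono) (rule ptw)
    also have "\<dots> = emeasure \<mu> {y0 x}" by (simp add: \<mu>_def)
    also have "\<dots> = emeasure lborel ({0..a} \<inter> {y0 x}) / emeasure lborel {0..a}" by (simp add: \<mu>_def)
    also have "emeasure lborel ({0..a} \<inter> {y0 x}) = 0"
      using emeasure_mono[of "{0..a} \<inter> {y0 x}" "{y0 x}" lborel] by simp
    finally have le: "(\<integral>\<^sup>+ y. indicator ?N (x(e0 := y)) \<partial>\<mu>) \<le> 0 / emeasure lborel {0..a}" .
    have "0 / emeasure lborel {0..a} = (0::ennreal)" by simp
    then show ?thesis using le by (simp only: le_zero_eq)
  qed
  have "emeasure ?P ?N = (\<integral>\<^sup>+ w. indicator ?N w \<partial>?P)" using Nsets by simp
  also have "\<dots> = (\<integral>\<^sup>+ w. indicator ?N w \<partial>(PiM (insert e0 I) (\<lambda>_. \<mu>)))"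
    unfolding \<mu>_def E_eq(1) ..
  also have "\<dots> = (\<integral>\<^sup>+ x. (\<integral>\<^sup>+ y. indicator ?N (x(e0 := y)) \<partial>\<mu>) \<partial>(PiM I (\<lambda>_. \<mu>)))"
    by (rule ps.product_nn_integral_insert[OF E_eq(3,2)])
       (use Nsets in \<open>simp add: E_eq(1)[symmetric] \<mu>_def\<close>)
  also have "\<dots> = 0" by (simp add: inner)
  finally show ?thesis using Nsets by (simp add: null_sets_def)
qed




lemma adjuster_dim: "dim_vec (adjuster n w us) = n"
  by (induct us) auto

lemma adj_meas:
  fixes g :: "'x \<Rightarrow> real vec" and qs :: "real vec list"
  assumes qs: "set qs \<subseteq> carrier_vec n"
    and gm: "\<And>k. k < n \<Longrightarrow> (\<lambda>w. g w $ k) \<in> borel_measurable M"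
    and i: "i < n"
  shows "(\<lambda>w. adjuster n (g w) qs $ i) \<in> borel_measurable M"
  using qs
proof (induct qs)
  case Nil
  then show ?case using i by simp
next
  case (Cons q qs)
  then have q: "q \<in> carrier_vec n" and IH: "(\<lambda>w. adjuster n (g w) qs $ i) \<in> borel_measurable M" by auto
  have eq: "adjuster n (g w) (q # qs) $ i
     = - (\<Sum>k\<in>{0..<n}. g w $ k * q $ k) / (\<Sum>k\<in>{0..<n}. q $ k * q $ k) * q $ i + adjuster n (g w) qs $ i" for w
    using q i by (simp add: adjuster_dim scalar_prod_def)
  show ?case unfolding eq using IH gm by measurable
qed

theorem lemma3p4:
  fixes V :: "'v set" and E :: "'v set set" and Q :: "'v set" and k :: nat
    and c :: "'v set \<Rightarrow> real"
    and m :: nat and Sf :: "nat \<Rightarrow> 'v set" and Wf :: "nat \<Rightarrow> 'v set"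
    and es :: "'v set list" and A :: "real mat"
  assumes net: "k_terminal_network V E Q k c"
    and uniq: "\<forall>S. nontrivial_terminal_set Q S \<longrightarrow> unique_min_cut V E Q c S"
    and m_def: "m = 2 ^ (k - 1) - 1"
    and Sf_nontriv: "\<forall>i<m. nontrivial_terminal_set Q (Sf i)"
    and Sf_distinct: "\<forall>i<m. \<forall>j<m. i \<noteq> j \<longrightarrow> Sf j \<noteq> Sf i \<and> Sf j \<noteq> Q - Sf i"
    and Wf_min: "\<forall>i<m. min_separating V E Q c (Sf i) (Wf i)"
    and es: "distinct es" "set es = E"
    and rank_pos: "vec_space.rank m (cutset_matrix E m Wf es) \<ge> 1"
    and A_carrier: "A \<in> carrier_mat m (vec_space.rank m (cutset_matrix E m Wf es) - 1)"
    and A_01: "\<forall>i<m. \<forall>j<dim_col A. A $$ (i, j) \<in> {0, 1}"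
  shows "{w \<in> space (PiM E (\<lambda>_. uniform_measure lborel
                  {0 .. 1 / (Delta V E Q c * real (card E))})).
           Matrix.mult_mat_vec (cutset_matrix E m Wf es) (Matrix.vec (length es) (\<lambda>j. c (es ! j) + w (es ! j)))
             \<in> {Matrix.mult_mat_vec A x | x. x \<in> carrier_vec (dim_col A)}}
         \<in> null_sets (PiM E (\<lambda>_. uniform_measure lborel
                  {0 .. 1 / (Delta V E Q c * real (card E))}))"
proof -
  define a where "a = 1 / (Delta V E Q c * real (card E))"
  define \<mu> where "\<mu> = uniform_measure lborel {0..a}"
  define P where "P = PiM E (\<lambda>_. \<mu>)"
  define N where "N = length es"
  define MG where "MG = cutset_matrix E m Wf es"
  have MG: "MG \<in> carrier_mat m N" by (simp add: MG_def N_def cutset_matrix_def)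
  interpret R: rvs m .
  have "R.rank A \<le> R.rank MG - 1" using R.rank_le_nc[OF A_carrier] unfolding MG_def .
  then have rkA: "R.rank A < R.rank MG" using rank_pos unfolding MG_def by linarith
  obtain qs u j0 where qs: "set qs \<subseteq> carrier_vec m" "corthogonal qs" "R.span (set qs) = R.span (set (cols A))"
    and j0: "j0 < N" and u0: "u j0 \<noteq> 0"
    and key: "\<forall>v \<in> carrier_vec N. MG *\<^sub>v v \<in> R.span (set qs) \<longrightarrow> (\<Sum>j\<in>{0..<N}. u j * v $ j) = 0"
    using R.key_vector[OF MG A_carrier rkA] by blast
  have colsp: "v \<in> {Matrix.mult_mat_vec A x | x. x \<in> carrier_vec (dim_col A)} \<longleftrightarrow> v \<in> R.span (set qs)"
    if v: "v \<in> carrier_vec m" for v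
  proof -
    have "R.col_space A = {y \<in> carrier_vec (dim_row A). \<exists>x\<in>carrier_vec (dim_col A). A *\<^sub>v x = y}"
      by (rule R.col_space_eq[OF A_carrier])
    then show ?thesis using v A_carrier qs(3) unfolding R.col_space_def by auto
  qed
  define g where "g w = MG *\<^sub>v Matrix.vec N (\<lambda>j. c (es ! j) + w (es ! j))" for w :: "'v set \<Rightarrow> real"
  have g: "g w \<in> carrier_vec m" for w using MG unfolding g_def by auto
  have esE: "\<And>j. j < N \<Longrightarrow> es ! j \<in> E" using es unfolding N_def by auto
  have meas_comp [measurable]: "(\<lambda>w. w (es ! j)) \<in> borel_measurable P" if "j < N" for j
  proof -
    have "(\<lambda>w. w (es ! j)) \<in> measurable P \<mu>"
      unfolding P_def by (rule measurable_component_singleton) (use esE that in auto)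
    moreover have "measurable P \<mu> = measurable P borel"
      by (rule measurable_cong_sets) (simp_all add: \<mu>_def)
    ultimately show ?thesis by simp
  qed
  have gm: "(\<lambda>w. g w $ k) \<in> borel_measurable P" if k: "k < m" for k
  proof -
    have eq: "(\<lambda>w. g w $ k) = (\<lambda>w. \<Sum>j\<in>{0..<N}. row MG k $ j * (c (es ! j) + w (es ! j)))"
      using MG k unfolding g_def by (auto simp: scalar_prod_def)
    show ?thesis unfolding eq by measurable
  qed
  have hm [measurable]: "(\<lambda>w. (adjuster m (g w) qs + g w) $ i) \<in> borel_measurable P" if i: "i < m" for i
  proof -
    have eq: "(\<lambda>w. (adjuster m (g w) qs + g w) $ i) = (\<lambda>w. adjuster m (g w) qs $ i + g w $ i)"
    proof (rule ext)
      fix w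
      have "i < dim_vec (g w)" using g[of w] i by auto
      then show "(adjuster m (g w) qs + g w) $ i = adjuster m (g w) qs $ i + g w $ i"
        by (rule index_add_vec(1))
    qed
    have adjm: "(\<lambda>w. adjuster m (g w) qs $ i) \<in> borel_measurable P"
      by (rule adj_meas[OF qs(1) gm i])
    show ?thesis unfolding eq by (rule borel_measurable_add[OF adjm gm[OF i]])
  qed
  define S where "S = {w \<in> space P. g w \<in> {Matrix.mult_mat_vec A x | x. x \<in> carrier_vec (dim_col A)}}"
  have S_eq: "S = {w \<in> space P. \<forall>i<m. (adjuster m (g w) qs + g w) $ i = 0}"
  proof -
    have e: "g w \<in> {Matrix.mult_mat_vec A x | x. x \<in> carrier_vec (dim_col A)} \<longleftrightarrow> (\<forall>i<m. (adjuster m (g w) qs + g w) $ i = 0)" for w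
    proof -
      have ac: "adjuster m (g w) qs + g w \<in> carrier_vec m"
        using g[of w] unfolding carrier_vec_def by (simp add: adjuster_dim)
      have e1: "g w \<in> {Matrix.mult_mat_vec A x | x. x \<in> carrier_vec (dim_col A)} \<longleftrightarrow> g w \<in> R.span (set qs)"
        by (rule colsp[OF g])
      have e2: "g w \<in> R.span (set qs) \<longleftrightarrow> adjuster m (g w) qs + g w = 0\<^sub>v m"
        by (rule R.proj_zero_iff[OF qs(1,2) g])
      have e3: "adjuster m (g w) qs + g w = 0\<^sub>v m \<longleftrightarrow> (\<forall>i<m. (adjuster m (g w) qs + g w) $ i = 0)"
      proof
        assume "adjuster m (g w) qs + g w = 0\<^sub>v m"
        then show "\<forall>i<m. (adjuster m (g w) qs + g w) $ i = 0" by simp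
      next
        assume H: "\<forall>i<m. (adjuster m (g w) qs + g w) $ i = 0"
        show "adjuster m (g w) qs + g w = 0\<^sub>v m"
          by (rule eq_vecI) (use ac H g[of w] in auto)
      qed
      show ?thesis using e1 e2 e3 by blast
    qed
    show ?thesis unfolding S_def by (simp only: e)
  qed
  have Ssets: "S \<in> sets P"
  proof -
    have "S = {w \<in> space P. \<forall>i\<in>{..<m}. (adjuster m (g w) qs + g w) $ i = 0}"
      unfolding S_eq by auto
    also have "\<dots> \<in> sets P"
    proof (rule sets.sets_Collect_finite_All)
      fix i assume "i \<in> {..<m}"
      then have i: "i < m" by simp
      have [measurable]: "(\<lambda>w. (adjuster m (g w) qs + g w) $ i) \<in> borel_measurable P" by (rule hm[OF i])
      show "{w \<in> space P. (adjuster m (g w) qs + g w) $ i = 0} \<in> sets P" by measurable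
    qed simp
    finally show ?thesis .
  qed
  define N0 where "N0 = {w \<in> space P. (\<Sum>j\<in>{0..<length es}. u j * (c (es ! j) + w (es ! j))) = 0}"
  have N0: "N0 \<in> null_sets P"
    unfolding N0_def P_def \<mu>_def using null_hyperplane[where u=u and c=c and a=a, OF es j0[unfolded N_def] u0] .
  have "S \<subseteq> N0"
  proof
    fix w assume w: "w \<in> S"
    define v where "v = Matrix.vec N (\<lambda>j. c (es ! j) + w (es ! j))"
    have v: "v \<in> carrier_vec N" unfolding v_def by simp
    have "MG *\<^sub>v v \<in> R.span (set qs)" using w colsp[OF g[of w]] unfolding S_def g_def v_def by auto
    then have "(\<Sum>j\<in>{0..<N}. u j * v $ j) = 0" using key v by blast
    then have "(\<Sum>j\<in>{0..<length es}. u j * (c (es ! j) + w (es ! j))) = 0"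
      unfolding v_def N_def by simp
    then show "w \<in> N0" using w unfolding N0_def S_def by auto
  qed
  then have "S \<in> null_sets P" using null_sets_subset[OF N0 Ssets] by simp
  then show ?thesis unfolding S_def g_def P_def \<mu>_def a_def MG_def N_def .
qed

end
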